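(* Assume (A1). Then every connected component of $\mathcal{C}=\{x\in\mathcal{E}:\|h(x)\|\le R\}$ contains a point $\bar z$ with $h(\bar z)=0$.
   Context: $\mathcal{E}$ is a Euclidean space, $h\colon\mathcal{E}\to\mathbb{R}^m$ is $C^\infty$, $\|\cdot\|$ is the 2-norm on $\mathbb{R}^m$, and $\sigma_{\min}(\mathrm{D}h(x))$ denotes the $m$-th singular value of the differential $\mathrm{D}h(x)\colon\mathcal{E}\to\mathbb{R}^m$. (A1): there exist constants $R,\underline{\sigma}>0$ such that $\sigma_{\min}(\mathrm{D}h(x))\ge\underline{\sigma}$ for all $x\in\mathcal{C}=\{x:\|h(x)\|\le R\}$. *)

theory Defs
  imports "HOL-Analysis.Analysis"
begin

inductive_set iter_dir_derivs :: "('a::real_normed_vector \<Rightarrow> 'b::real_normed_vector) \<Rightarrow> ('a \<Rightarrow> 'b) set"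
  for f where
  base: "f \<in> iter_dir_derivs f"
| step: "g \<in> iter_dir_derivs f \<Longrightarrow> (\<forall>x. g differentiable (at x))
          \<Longrightarrow> (\<lambda>x. frechet_derivative g (at x) v) \<in> iter_dir_derivs f"

definition smooth :: "('a::real_normed_vector \<Rightarrow> 'b::real_normed_vector) \<Rightarrow> bool" where
  "smooth f \<longleftrightarrow> (\<forall>g \<in> iter_dir_derivs f. \<forall>x. g differentiable (at x))"

text \<open>k-th singular value of a linear map (Courant--Fischer): maximum over k-dimensional
  subspaces V of the minimum of norm (L x) over unit vectors x in V; 0 if there is no such subspace.\<close>
definition singular_value :: "nat \<Rightarrow> ('a::euclidean_space \<Rightarrow> 'b::real_inner) \<Rightarrow> real" where
  "singular_value k L =
     (if \<exists>V::'a set. subspace V \<and> dim V = k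
      then Sup {Inf {norm (L x) | x. x \<in> V \<and> norm x = 1} | V. subspace V \<and> dim V = k}
      else 0)"

end

theory Submission
  imports Defs
begin

lemma surj_lemma:
  fixes L :: "'a::euclidean_space \<Rightarrow> real ^ 'm"
  assumes lin: "linear L" and V: "subspace V" and dV: "dim V = CARD('m)"
    and c: "c > 0" and bd: "\<forall>x\<in>V. c * norm x \<le> norm (L x)"
  shows "\<exists>x\<in>V. L x = y"
proof -
  have inj: "inj_on L (span V)"
    unfolding span_eq_iff[THEN iffD2, OF V]
  proof (rule inj_onI)
    fix a b assume a: "a \<in> V" and b: "b \<in> V" and e: "L a = L b"
    have "a - b \<in> V" using a b V by (simp add: subspace_diff)
    hence "c * norm (a - b) \<le> norm (L (a - b))" using bd by blast
    also have "L (a - b) = 0" using e lin by (simp add: linear_diff)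
    finally show "a = b" using c by (simp add: mult_le_0_iff)
  qed
  have "dim (L ` V) = dim V" by (rule dim_image_eq[OF lin inj])
  hence "dim (L ` V) = DIM(real ^ 'm)" using dV by simp
  hence "span (L ` V) = UNIV" using dim_eq_full by blast
  moreover have "span (L ` V) = L ` V"
    by (simp add: V lin linear_subspace_image span_eq_iff)
  ultimately show ?thesis by (metis UNIV_I imageE)
qed

lemma sv_lemma:
  fixes L :: "'a::euclidean_space \<Rightarrow> real ^ 'm"
  assumes lin: "linear L" and sv: "singular_value CARD('m) L \<ge> \<sigma>" and sp: "\<sigma> > 0"
  shows "\<exists>V. subspace V \<and> dim V = CARD('m) \<and> (\<forall>x\<in>V. (3/4*\<sigma>) * norm x \<le> norm (L x))"
proof -
  have ex: "\<exists>V::'a set. subspace V \<and> dim V = CARD('m)"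
  proof (rule ccontr)
    assume "\<not> ?thesis" hence "singular_value CARD('m) L = 0" unfolding singular_value_def by argo
    thus False using sv sp by linarith
  qed
  define T where "T = {Inf {norm (L x) | x. x \<in> V \<and> norm x = 1} | V. subspace V \<and> dim V = CARD('m)}"
  have svT: "singular_value CARD('m) L = Sup T" using ex unfolding singular_value_def T_def by simp
  obtain B where B: "\<And>x. norm (L x) \<le> norm x * B"
    using bounded_linear.bounded[OF linear_conv_bounded_linear[THEN iffD1, OF lin]] by blast
  have unit: "\<exists>u\<in>V. norm u = 1" if "subspace V" "dim V = CARD('m)" for V :: "'a set"
  proof -
    have "V \<noteq> {0}" proof assume "V = {0}" hence "dim V = 0" by simp thus False using that(2) by simp qed
    moreover have "0 \<in> V" using that(1) subspace_0 by blast
    ultimately obtain y where y: "y \<in> V" "y \<noteq> 0" by blast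
    show ?thesis using y that(1) by (intro bexI[of _ "y /\<^sub>R norm y"]) (auto simp: subspace_scale)
  qed
  have bdd: "bdd_above T" unfolding T_def
  proof (rule bdd_aboveI[of _ B], safe)
    fix V :: "'a set" assume V: "subspace V" "dim V = CARD('m)"
    obtain u where u: "u \<in> V" "norm u = 1" using unit[OF V] by blast
    have "Inf {norm (L x) | x. x \<in> V \<and> norm x = 1} \<le> norm (L u)"
      by (rule cInf_lower) (use u in \<open>auto intro: bdd_belowI[of _ 0]\<close>)
    also have "\<dots> \<le> B" using B[of u] u by simp
    finally show "Inf {norm (L x) | x. x \<in> V \<and> norm x = 1} \<le> B" .
  qed
  have ne: "T \<noteq> {}" using ex unfolding T_def by blast
  have "3/4*\<sigma> < Sup T" using sv svT sp by linarith
  then obtain t where "t \<in> T" "3/4*\<sigma> < t" using less_cSup_iff[OF ne bdd] by blast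
  then obtain V where V: "subspace V" "dim V = CARD('m)"
    and tV: "3/4*\<sigma> < Inf {norm (L x) | x. x \<in> V \<and> norm x = 1}" unfolding T_def by blast
  have "(3/4*\<sigma>) * norm x \<le> norm (L x)" if x: "x \<in> V" for x
  proof (cases "x = 0")
    case True thus ?thesis using lin by (simp add: linear_0)
  next
    case False
    let ?u = "x /\<^sub>R norm x"
    have "?u \<in> V" using x V(1) by (simp add: subspace_scale)
    moreover have "norm ?u = 1" using False by simp
    ultimately have "Inf {norm (L x) | x. x \<in> V \<and> norm x = 1} \<le> norm (L ?u)"
      by (intro cInf_lower) (auto intro: bdd_belowI[of _ 0])
    also have "norm (L ?u) = norm (L x) / norm x" using lin by (simp add: linear_scale divide_inverse_commute)
    finally have "3/4*\<sigma> < norm (L x) / norm x" using tV by linarith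
    thus ?thesis using False by (simp add: pos_less_divide_eq mult.commute)
  qed
  thus ?thesis using V by blast
qed

theorem mainTheorem6:
  fixes h :: "'a::euclidean_space \<Rightarrow> real ^ 'm"
    and R \<sigma> :: real
  assumes smooth_h: "smooth h"
    and R_pos: "R > 0" and \<sigma>_pos: "\<sigma> > 0"
    and A1: "\<forall>x \<in> {x. norm (h x) \<le> R}.
               singular_value CARD('m) (frechet_derivative h (at x)) \<ge> \<sigma>"
  shows "\<forall>x \<in> {x. norm (h x) \<le> R}.
           \<exists>z \<in> connected_component_set {x. norm (h x) \<le> R} x. h z = 0"
proof
  define C where "C = {x. norm (h x) \<le> R}"
  have hd: "\<And>x. h differentiable (at x)"
    using smooth_h iter_dir_derivs.base[of h] unfolding smooth_def by blast
  have cont: "continuous_on UNIV h"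
    using hd by (simp add: differentiable_imp_continuous_within continuous_at_imp_continuous_on)
  have clC: "closed C" unfolding C_def
    by (intro closed_Collect_le continuous_on_norm cont continuous_on_const)
  fix x0 assume x0: "x0 \<in> {x. norm (h x) \<le> R}"
  define K where "K = connected_component_set C x0"
  have KC: "K \<subseteq> C" unfolding K_def by (rule connected_component_subset)
  have x0K: "x0 \<in> K" using x0 unfolding K_def C_def by simp
  define r where "r = norm (h x0)"
  define \<rho> where "\<rho> = 2 * r / \<sigma> + 1"
  define S where "S = cball x0 \<rho> \<inter> K"
  define \<psi> where "\<psi> = (\<lambda>y. norm (h y) + \<sigma> / 2 * dist y x0)"
  have cS: "compact S" unfolding S_def K_def
    by (intro compact_Int_closed compact_cball closed_connected_component clC)
  have x0S: "x0 \<in> S" unfolding S_def using x0K \<sigma>_pos r_def \<rho>_def by simp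
  have cpsi: "continuous_on S \<psi>" unfolding \<psi>_def
    by (intro continuous_intros continuous_on_subset[OF cont]) auto
  obtain z where zS: "z \<in> S" and zmin: "\<And>y. y \<in> S \<Longrightarrow> \<psi> z \<le> \<psi> y"
    using continuous_attains_inf[OF cS _ cpsi] x0S by blast
  have zK: "z \<in> K" using zS S_def by simp
  have zC: "norm (h z) \<le> R" using zK KC C_def by blast
  show "\<exists>z \<in> connected_component_set {x. norm (h x) \<le> R} x0. h z = 0"
  proof (rule ccontr)
    assume nz: "\<not> ?thesis"
    hence hz: "h z \<noteq> 0" using zK K_def C_def by blast
    define p where "p = norm (h z)"
    have pp: "p > 0" using hz p_def by simp
    define L where "L = frechet_derivative h (at z)"
    have der: "(h has_derivative L) (at z)" using hd L_def frechet_derivative_works by blast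
    have lin: "linear L" using der has_derivative_linear by blast
    have "singular_value CARD('m) L \<ge> \<sigma>" using A1 zC L_def by blast
    then obtain V where V: "subspace V" "dim V = CARD('m)"
      and Vb: "\<forall>x\<in>V. (3/4*\<sigma>) * norm x \<le> norm (L x)"
      using sv_lemma[OF lin _ \<sigma>_pos] by blast
    obtain v where "v \<in> V" and Lv: "L v = - h z"
      using surj_lemma[OF lin V _ Vb] \<sigma>_pos by auto
    hence "(3/4*\<sigma>) * norm v \<le> p" using Vb p_def by fastforce
    hence nv: "\<sigma> / 2 * norm v \<le> 2/3 * p" by simp
    have v0: "v \<noteq> 0" using Lv hz lin linear_0 by force
    hence nvp: "norm v > 0" by simp
    define e where "e = p / (6 * norm v)"
    have ep: "e > 0" using pp nvp e_def by simp
    obtain d where dp: "d > 0" and dd: "\<And>y. norm (y - z) < d \<Longrightarrow>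
        norm (h y - h z - L (y - z)) \<le> e * norm (y - z)"
      using der[unfolded has_derivative_within_alt] ep by blast
    have "\<psi> z \<le> \<psi> x0" using zmin x0S by blast
    hence "norm (h z) + \<sigma> / 2 * dist z x0 \<le> r" unfolding \<psi>_def r_def by simp
    hence "\<sigma> / 2 * dist z x0 \<le> r" using norm_ge_zero[of "h z"] by linarith
    hence "dist z x0 \<le> 2 * r / \<sigma>" using \<sigma>_pos by (simp add: field_simps)
    hence dz: "dist z x0 < \<rho>" unfolding \<rho>_def by simp
    define s where "s = min (1/2) (min (d / (2 * norm v)) ((\<rho> - dist z x0) / (2 * norm v)))"
    have sp: "s > 0" using dp nvp dz s_def by simp
    have s1: "s \<le> 1/2" using s_def by simp
    have sd: "s * norm v < d"
    proof -
      have "s \<le> d / (2 * norm v)" using s_def by simp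
      hence "s * norm v \<le> d / 2" using nvp by (simp add: field_simps)
      thus ?thesis using dp by simp
    qed
    have sr: "s * norm v < \<rho> - dist z x0"
    proof -
      have "s \<le> (\<rho> - dist z x0) / (2 * norm v)" using s_def by simp
      hence "s * norm v \<le> (\<rho> - dist z x0) / 2" using nvp by (simp add: field_simps)
      thus ?thesis using dz by simp
    qed
    have est: "norm (h (z + t *\<^sub>R v)) \<le> (1 - t) * p + t * p / 6"
      if t: "0 \<le> t" "t \<le> s" for t
    proof -
      have "norm ((z + t *\<^sub>R v) - z) = t * norm v" using t by simp
      also have "\<dots> \<le> s * norm v" using t nvp by (simp add: mult_right_mono)
      finally have "norm ((z + t *\<^sub>R v) - z) < d" using sd by simp
      hence "norm (h (z + t *\<^sub>R v) - h z - L ((z + t *\<^sub>R v) - z)) \<le> e * norm ((z + t *\<^sub>R v) - z)"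
        by (rule dd)
      moreover have "L ((z + t *\<^sub>R v) - z) = - t *\<^sub>R h z" using lin Lv by (simp add: linear_scale)
      moreover have "e * norm ((z + t *\<^sub>R v) - z) = t * p / 6"
        using t nvp e_def by simp
      ultimately have a: "norm (h (z + t *\<^sub>R v) - (1 - t) *\<^sub>R h z) \<le> t * p / 6"
        by (simp add: algebra_simps)
      have "norm (h (z + t *\<^sub>R v)) \<le> norm ((1 - t) *\<^sub>R h z) + norm (h (z + t *\<^sub>R v) - (1 - t) *\<^sub>R h z)"
        by (rule norm_triangle_sub)
      also have "norm ((1 - t) *\<^sub>R h z) = (1 - t) * p" using t s1 p_def by simp
      finally show ?thesis using a by linarith
    qed
    define seg where "seg = (\<lambda>t. z + t *\<^sub>R v) ` {0..s}"
    have "connected seg" unfolding seg_def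
      by (intro connected_continuous_image connected_Icc continuous_intros)
    moreover have "z \<in> seg" unfolding seg_def using sp by (auto intro!: image_eqI[of _ _ 0])
    moreover have "seg \<subseteq> C"
    proof
      fix y assume "y \<in> seg"
      then obtain t where t: "0 \<le> t" "t \<le> s" and y: "y = z + t *\<^sub>R v" unfolding seg_def by auto
      have "(1 - t) * p + t * p / 6 \<le> p" using t pp by (simp add: algebra_simps)
      thus "y \<in> C" using est[OF t] zC p_def y C_def by simp
    qed
    ultimately have "seg \<subseteq> connected_component_set C z" using connected_component_maximal by blast
    also have "\<dots> = K" unfolding K_def using zK K_def connected_component_eq by blast
    finally have "z + s *\<^sub>R v \<in> K" unfolding seg_def using sp by (meson atLeastAtMost_iff image_subset_iff less_eq_real_def order_refl)
    moreover have "dist (z + s *\<^sub>R v) x0 \<le> \<rho>"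
    proof -
      have "dist (z + s *\<^sub>R v) x0 \<le> dist (z + s *\<^sub>R v) z + dist z x0" by (rule dist_triangle)
      also have "dist (z + s *\<^sub>R v) z = s * norm v" using sp by (simp add: dist_norm)
      finally show ?thesis using sr by simp
    qed
    ultimately have yS: "z + s *\<^sub>R v \<in> S" unfolding S_def by (simp add: dist_commute)
    have "\<psi> (z + s *\<^sub>R v) \<le> (1 - s) * p + s * p / 6 + \<sigma> / 2 * (dist z x0 + s * norm v)"
    proof -
      have "dist (z + s *\<^sub>R v) x0 \<le> dist (z + s *\<^sub>R v) z + dist z x0" by (rule dist_triangle)
      also have "dist (z + s *\<^sub>R v) z = s * norm v" using sp by (simp add: dist_norm)
      finally have "dist (z + s *\<^sub>R v) x0 \<le> dist z x0 + s * norm v" by simp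
      hence "\<sigma> / 2 * dist (z + s *\<^sub>R v) x0 \<le> \<sigma> / 2 * (dist z x0 + s * norm v)"
        using \<sigma>_pos by (simp add: mult_left_mono)
      thus ?thesis unfolding \<psi>_def using est[of s] sp by simp
    qed
    also have "\<sigma> / 2 * (dist z x0 + s * norm v) = \<sigma> / 2 * dist z x0 + s * (\<sigma> / 2 * norm v)"
      by (simp add: algebra_simps)
    also have "s * (\<sigma> / 2 * norm v) \<le> s * (2/3 * p)" using nv sp by (simp add: mult_left_mono)
    finally have "\<psi> (z + s *\<^sub>R v) \<le> \<psi> z - s * p / 6"
      unfolding \<psi>_def p_def by (simp add: algebra_simps)
    moreover have "s * p / 6 > 0" using sp pp by simp
    ultimately have "\<psi> (z + s *\<^sub>R v) < \<psi> z" by linarith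
    thus False using zmin[OF yS] by linarith
  qed
qed

end
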